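(* Let $G$ and $H$ be finite simple connected graphs of order at least $3$. If the direct product $G \times H$ is well-dominated, then every minimum dominating set of $G$ and every minimum dominating set of $H$ is an independent set.
   Context: A graph is well-dominated if every minimal (with respect to inclusion) dominating set is a minimum dominating set. The direct product $G\times H$ has vertex set $V(G)\times V(H)$, with $(g_1,h_1)$ adjacent to $(g_2,h_2)$ iff $g_1g_2\in E(G)$ and $h_1h_2\in E(H)$. *)

theory Defs
  imports Main
begin

definition simple_graph :: "'a set \<Rightarrow> ('a \<Rightarrow> 'a \<Rightarrow> bool) \<Rightarrow> bool" where
  "simple_graph V E \<longleftrightarrow> finite V \<and> (\<forall>x y. E x y \<longrightarrow> x \<in> V \<and> y \<in> V)
     \<and> (\<forall>x y. E x y \<longrightarrow> E y x) \<and> (\<forall>x. \<not> E x x)"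

definition connected_graph :: "'a set \<Rightarrow> ('a \<Rightarrow> 'a \<Rightarrow> bool) \<Rightarrow> bool" where
  "connected_graph V E \<longleftrightarrow> V \<noteq> {} \<and>
     (\<forall>x\<in>V. \<forall>y\<in>V. (x, y) \<in> (Restr {(u, v). E u v} V)\<^sup>*)"

definition dominating_set :: "'a set \<Rightarrow> ('a \<Rightarrow> 'a \<Rightarrow> bool) \<Rightarrow> 'a set \<Rightarrow> bool" where
  "dominating_set V E D \<longleftrightarrow> D \<subseteq> V \<and> (\<forall>v\<in>V. v \<in> D \<or> (\<exists>u\<in>D. E u v))"

definition minimal_dominating_set :: "'a set \<Rightarrow> ('a \<Rightarrow> 'a \<Rightarrow> bool) \<Rightarrow> 'a set \<Rightarrow> bool" where
  "minimal_dominating_set V E D \<longleftrightarrow> dominating_set V E D \<and>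
     (\<forall>D'. D' \<subset> D \<longrightarrow> \<not> dominating_set V E D')"

definition minimum_dominating_set :: "'a set \<Rightarrow> ('a \<Rightarrow> 'a \<Rightarrow> bool) \<Rightarrow> 'a set \<Rightarrow> bool" where
  "minimum_dominating_set V E D \<longleftrightarrow> dominating_set V E D \<and>
     (\<forall>D'. dominating_set V E D' \<longrightarrow> card D \<le> card D')"

definition well_dominated :: "'a set \<Rightarrow> ('a \<Rightarrow> 'a \<Rightarrow> bool) \<Rightarrow> bool" where
  "well_dominated V E \<longleftrightarrow> (\<forall>D. minimal_dominating_set V E D \<longrightarrow> minimum_dominating_set V E D)"

definition independent_set :: "'a set \<Rightarrow> ('a \<Rightarrow> 'a \<Rightarrow> bool) \<Rightarrow> 'a set \<Rightarrow> bool" where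
  "independent_set V E S \<longleftrightarrow> S \<subseteq> V \<and> (\<forall>x\<in>S. \<forall>y\<in>S. \<not> E x y)"

definition direct_prod_vertices :: "'a set \<Rightarrow> 'b set \<Rightarrow> ('a \<times> 'b) set" where
  "direct_prod_vertices VG VH = VG \<times> VH"

definition direct_prod_edges ::
  "('a \<Rightarrow> 'a \<Rightarrow> bool) \<Rightarrow> ('b \<Rightarrow> 'b \<Rightarrow> bool) \<Rightarrow> 'a \<times> 'b \<Rightarrow> 'a \<times> 'b \<Rightarrow> bool" where
  "direct_prod_edges EG EH p q \<longleftrightarrow> EG (fst p) (fst q) \<and> EH (snd p) (snd q)"

end

theory Submission
  imports Defs
begin

lemma maxind_exists:
  assumes "finite V"
  shows "\<exists>I. independent_set V E I \<and> (\<forall>J. independent_set V E J \<longrightarrow> card J \<le> card I)"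
proof -
  let ?X = "{I. independent_set V E I}"
  have fin: "finite ?X"
    by (rule finite_subset[of _ "Pow V"]) (auto simp: independent_set_def assms)
  have ne: "{} \<in> ?X" by (simp add: independent_set_def)
  have "finite (card ` ?X)" "card ` ?X \<noteq> {}" using fin ne by auto
  then have "Max (card ` ?X) \<in> card ` ?X" by (rule Max_in)
  then obtain I where I: "I \<in> ?X" "card I = Max (card ` ?X)" by auto
  have "\<forall>J. independent_set V E J \<longrightarrow> card J \<le> card I"
    using I fin by auto
  with I show ?thesis by auto
qed

lemma maxind_dom:
  assumes sg: "simple_graph V E" and ind: "independent_set V E I"
    and mx: "\<forall>J. independent_set V E J \<longrightarrow> card J \<le> card I"
  shows "dominating_set V E I"
proof -
  have fV: "finite V" and sym: "\<And>x y. E x y \<Longrightarrow> E y x" and irr: "\<And>x. \<not> E x x"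
    using sg by (auto simp: simple_graph_def)
  have IV: "I \<subseteq> V" using ind by (simp add: independent_set_def)
  have fI: "finite I" using IV fV finite_subset by auto
  { fix v assume v: "v \<in> V" "v \<notin> I" "\<not> (\<exists>u\<in>I. E u v)"
    have "independent_set V E (insert v I)"
      using ind v irr sym IV unfolding independent_set_def by blast
    then have "card (insert v I) \<le> card I" using mx by blast
    moreover have "card (insert v I) = card I + 1" using fI v by simp
    ultimately have False by simp }
  then show ?thesis using IV unfolding dominating_set_def by blast
qed

lemma ind_minimal:
  assumes ind: "independent_set V E I" and dom: "dominating_set V E I"
  shows "minimal_dominating_set V E I"
  unfolding minimal_dominating_set_def
proof (intro conjI allI impI dom)
  fix D' assume D': "D' \<subset> I"
  then obtain x where x: "x \<in> I" "x \<notin> D'" by blast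
  show "\<not> dominating_set V E D'"
  proof
    assume d: "dominating_set V E D'"
    have "x \<in> V" using x ind by (auto simp: independent_set_def)
    then obtain u where "u \<in> D'" "E u x" using d x by (auto simp: dominating_set_def)
    then show False using ind x D' by (auto simp: independent_set_def)
  qed
qed

lemma path_leaves:
  assumes "(x, w) \<in> R\<^sup>*" "x \<in> C" "w \<notin> C"
  shows "\<exists>x'\<in>C. \<exists>y. y \<notin> C \<and> (x', y) \<in> R"
  using assms
proof (induction rule: rtrancl_induct)
  case base then show ?case by simp
next
  case (step z w)
  show ?case
  proof (cases "z \<in> C")
    case True then show ?thesis using step by blast
  next
    case False then show ?thesis using step by blast
  qed
qed

lemma good_vertex:
  assumes sg: "simple_graph VH EH" and cn: "connected_graph VH EH" and c3: "card VH \<ge> 3"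
  shows "\<exists>v\<in>VH. \<forall>h\<in>VH. \<exists>h'. EH h h' \<and> h' \<noteq> v"
proof -
  let ?R = "Restr {(u, v). EH u v} VH"
  have fV: "finite VH" and sym: "\<And>x y. EH x y \<Longrightarrow> EH y x" and irr: "\<And>x. \<not> EH x x"
    and inV: "\<And>x y. EH x y \<Longrightarrow> x \<in> VH \<and> y \<in> VH"
    using sg by (auto simp: simple_graph_def)
  have conn: "\<And>x y. x \<in> VH \<Longrightarrow> y \<in> VH \<Longrightarrow> (x, y) \<in> ?R\<^sup>*"
    using cn by (auto simp: connected_graph_def)
  have other: "\<exists>w\<in>VH. w \<notin> C" if "finite C" "card C \<le> 2" for C
  proof (rule ccontr)
    assume "\<not> ?thesis"
    then have "VH \<subseteq> C" by auto
    then have "card VH \<le> card C" using card_mono[OF that(1)] by simp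
    then show False using c3 that by simp
  qed
  have nb: "\<exists>y. EH h y" if h: "h \<in> VH" for h
  proof -
    obtain w where w: "w \<in> VH" "w \<notin> {h}" using other[of "{h}"] by auto
    have "\<exists>x'\<in>{h}. \<exists>y. y \<notin> {h} \<and> (x', y) \<in> ?R"
      by (rule path_leaves[OF conn[OF h w(1)]]) (use w in auto)
    then show ?thesis by auto
  qed
  show ?thesis
  proof (cases "\<exists>l\<in>VH. \<exists>u. EH l u \<and> (\<forall>y. EH l y \<longrightarrow> y = u)")
    case True
    then obtain l u where l: "l \<in> VH" "EH l u" "\<forall>y. EH l y \<longrightarrow> y = u" by blast
    have uV: "u \<in> VH" using inV l by blast
    show ?thesis
    proof (intro bexI[OF _ l(1)] ballI)
      fix h assume h: "h \<in> VH"
      show "\<exists>h'. EH h h' \<and> h' \<noteq> l"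
      proof (cases "h = u")
        case False
        obtain y where y: "EH h y" using nb h by blast
        have "y \<noteq> l"
        proof
          assume "y = l"
          then have "EH l h" using y sym by simp
          then have "h = u" using l(3) by simp
          then show False using \<open>h \<noteq> u\<close> by simp
        qed
        then show ?thesis using y by blast
      next
        case True
        obtain w where w: "w \<in> VH" "w \<notin> {u, l}" 
        proof -
          have c2: "card {u, l} \<le> 2" by (cases "u = l") simp_all
          have f2: "finite {u, l}" by simp
          have "\<exists>w\<in>VH. w \<notin> {u, l}" by (rule other[OF f2 c2])
          then show ?thesis using that by blast
        qed
        have "\<exists>x'\<in>{u,l}. \<exists>y. y \<notin> {u,l} \<and> (x', y) \<in> ?R"
          by (rule path_leaves[OF conn[OF uV w(1)]]) (use w in auto)
        then obtain x' y where xy: "x' \<in> {u,l}" "y \<notin> {u,l}" "EH x' y" by auto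
        have "x' = u"
        proof (rule ccontr)
          assume "x' \<noteq> u"
          then have "x' = l" using xy(1) by simp
          then have "y = u" using l(3) xy(3) by simp
          then show False using xy(2) by simp
        qed
        then show ?thesis using xy True by auto
      qed
    qed
  next
    case False
    obtain v where v: "v \<in> VH" using c3 by fastforce
    show ?thesis
    proof (intro bexI[OF _ v] ballI)
      fix h assume h: "h \<in> VH"
      obtain y where y: "EH h y" using nb h by blast
      show "\<exists>h'. EH h h' \<and> h' \<noteq> v"
      proof (cases "y = v")
        case False then show ?thesis using y by blast
      next
        case True
        have "\<not> (\<forall>y'. EH h y' \<longrightarrow> y' = v)" using False h y True by blast
        then show ?thesis by blast
      qed
    qed
  qed
qed

lemma prod_simple:
  assumes "simple_graph VG EG" "simple_graph VH EH"
  shows "simple_graph (VG \<times> VH) (direct_prod_edges EG EH)"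
  using assms unfolding simple_graph_def direct_prod_edges_def by auto

lemma key:
  assumes sgG: "simple_graph VG EG" and sgH: "simple_graph VH EH"
    and cnH: "connected_graph VH EH" and c3: "card VH \<ge> 3"
    and Dmin: "minimum_dominating_set VG EG D" and a: "a \<in> D" and b: "b \<in> D" and ab: "EG a b"
  shows "\<exists>M S. minimal_dominating_set (VG \<times> VH) (direct_prod_edges EG EH) M \<and>
    dominating_set (VG \<times> VH) (direct_prod_edges EG EH) S \<and> card S < card M"
proof -
  let ?V = "VG \<times> VH" and ?E = "direct_prod_edges EG EH"
  have fG: "finite VG" and symG: "\<And>x y. EG x y \<Longrightarrow> EG y x" and irrG: "\<And>x. \<not> EG x x"
    using sgG by (auto simp: simple_graph_def)
  have fH: "finite VH" and symH: "\<And>x y. EH x y \<Longrightarrow> EH y x"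
    and inH: "\<And>x y. EH x y \<Longrightarrow> x \<in> VH \<and> y \<in> VH"
    using sgH by (auto simp: simple_graph_def)
  have Ddom: "dominating_set VG EG D" and Dle: "\<And>D'. dominating_set VG EG D' \<Longrightarrow> card D \<le> card D'"
    using Dmin by (auto simp: minimum_dominating_set_def)
  have DV: "D \<subseteq> VG" using Ddom by (simp add: dominating_set_def)
  have fD: "finite D" using DV fG finite_subset by auto
  obtain v where v: "v \<in> VH" and vh: "\<forall>h\<in>VH. \<exists>h'. EH h h' \<and> h' \<noteq> v"
    using good_vertex[OF sgH cnH c3] by blast
  define S where "S = D \<times> VH - {(a, v)}"
  have Sdom: "dominating_set ?V ?E S"
    unfolding dominating_set_def
  proof (intro conjI ballI)
    show "S \<subseteq> ?V" using DV by (auto simp: S_def)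
  next
    fix p assume p: "p \<in> ?V"
    obtain g h where gh: "p = (g, h)" "g \<in> VG" "h \<in> VH" using p by auto
    show "p \<in> S \<or> (\<exists>u\<in>S. ?E u p)"
    proof (cases "p \<in> S")
      case True then show ?thesis by simp
    next
      case False
      then have "(g = a \<and> h = v) \<or> g \<notin> D" using gh by (auto simp: S_def)
      then show ?thesis
      proof
        assume av: "g = a \<and> h = v"
        obtain h' where h': "EH v h'" "h' \<noteq> v" using vh v by blast
        have "b \<noteq> a" using ab irrG by auto
        then have "(b, h') \<in> S" using b inH h' by (auto simp: S_def)
        moreover have "?E (b, h') p" using av gh ab symG symH h'
          by (auto simp: direct_prod_edges_def)
        ultimately show ?thesis by blast
      next
        assume gD: "g \<notin> D"
        obtain u where u: "u \<in> D" "EG u g" using Ddom gh gD by (auto simp: dominating_set_def)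
        obtain h' where h': "EH h h'" "h' \<noteq> v" using vh gh by blast
        have "(u, h') \<in> S" using u inH h' by (auto simp: S_def)
        moreover have "?E (u, h') p" using gh u symH h'
          by (auto simp: direct_prod_edges_def)
        ultimately show ?thesis by blast
      qed
    qed
  qed
  have cS: "card S = card D * card VH - 1"
    using a v fD fH by (simp add: S_def card_cartesian_product)
  obtain I where I: "independent_set VG EG I" "\<forall>J. independent_set VG EG J \<longrightarrow> card J \<le> card I"
    using maxind_exists[OF fG] by blast
  have "dominating_set VG EG I" using maxind_dom[OF sgG I] .
  then have DI: "card D \<le> card I" using Dle by blast
  have sgP: "simple_graph ?V ?E" using prod_simple[OF sgG sgH] .
  have fP: "finite ?V" using fG fH by simp
  obtain M where M: "independent_set ?V ?E M" "\<forall>J. independent_set ?V ?E J \<longrightarrow> card J \<le> card M"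
    using maxind_exists[OF fP] by blast
  have "independent_set ?V ?E (I \<times> VH)"
    using I(1) by (auto simp: independent_set_def direct_prod_edges_def)
  then have "card (I \<times> VH) \<le> card M" using M(2) by blast
  then have IM: "card I * card VH \<le> card M" by (simp add: card_cartesian_product)
  have Mmin: "minimal_dominating_set ?V ?E M"
    using ind_minimal[OF M(1) maxind_dom[OF sgP M]] .
  have "card D > 0" using a fD card_gt_0_iff by blast
  moreover have "card VH > 0" using v fH card_gt_0_iff by blast
  ultimately have pos: "card D * card VH > 0" by simp
  have "card D * card VH \<le> card I * card VH" using DI by simp
  then have "card S < card M" using cS IM pos by linarith
  then show ?thesis using Mmin Sdom by blast
qed

lemma swap_dom:
  assumes "dominating_set (A \<times> B) (direct_prod_edges E F) X"
  shows "dominating_set (B \<times> A) (direct_prod_edges F E) (prod.swap ` X)"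
  unfolding dominating_set_def
proof (intro conjI ballI)
  show "prod.swap ` X \<subseteq> B \<times> A" using assms by (auto simp: dominating_set_def)
next
  fix p assume p: "p \<in> B \<times> A"
  obtain x y where xy: "p = (y, x)" by (cases p) auto
  have "(x, y) \<in> A \<times> B" using p xy by auto
  then have "(x, y) \<in> X \<or> (\<exists>u\<in>X. direct_prod_edges E F u (x, y))"
    using assms by (auto simp: dominating_set_def)
  then show "p \<in> prod.swap ` X \<or> (\<exists>u\<in>prod.swap ` X. direct_prod_edges F E u p)"
  proof
    assume "(x, y) \<in> X" then have "prod.swap (x, y) \<in> prod.swap ` X" by blast
    then show ?thesis using xy by simp
  next
    assume "\<exists>u\<in>X. direct_prod_edges E F u (x, y)"
    then obtain u where u: "u \<in> X" "direct_prod_edges E F u (x, y)" by blast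
    have "prod.swap u \<in> prod.swap ` X" using u by blast
    moreover have "direct_prod_edges F E (prod.swap u) p" using u xy
      by (cases u) (simp add: direct_prod_edges_def)
    ultimately show ?thesis by blast
  qed
qed

lemma swap_min:
  assumes "minimal_dominating_set (A \<times> B) (direct_prod_edges E F) X"
  shows "minimal_dominating_set (B \<times> A) (direct_prod_edges F E) (prod.swap ` X)"
  unfolding minimal_dominating_set_def
proof (intro conjI allI impI)
  show "dominating_set (B \<times> A) (direct_prod_edges F E) (prod.swap ` X)"
    using assms swap_dom by (auto simp: minimal_dominating_set_def)
next
  fix D' assume D': "D' \<subset> prod.swap ` X"
  have "prod.swap ` D' \<subset> X" using D'
  proof -
    have "prod.swap ` D' \<subset> prod.swap ` (prod.swap ` X)"
      using D' by (intro image_strict_mono) (auto simp: inj_on_def)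
    then show ?thesis by (simp add: image_comp)
  qed
  then have "\<not> dominating_set (A \<times> B) (direct_prod_edges E F) (prod.swap ` D')"
    using assms by (auto simp: minimal_dominating_set_def)
  then show "\<not> dominating_set (B \<times> A) (direct_prod_edges F E) D'"
    using swap_dom[of B A F E D'] by (auto simp: image_comp)
qed

theorem corollary12:
  fixes VG :: "'a set" and EG :: "'a \<Rightarrow> 'a \<Rightarrow> bool"
    and VH :: "'b set" and EH :: "'b \<Rightarrow> 'b \<Rightarrow> bool"
  assumes "simple_graph VG EG" and "connected_graph VG EG" and "card VG \<ge> 3"
    and "simple_graph VH EH" and "connected_graph VH EH" and "card VH \<ge> 3"
    and "well_dominated (direct_prod_vertices VG VH) (direct_prod_edges EG EH)"
  shows "(\<forall>D. minimum_dominating_set VG EG D \<longrightarrow> independent_set VG EG D) \<and>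
         (\<forall>D. minimum_dominating_set VH EH D \<longrightarrow> independent_set VH EH D)"
proof -
  have wd: "\<And>M S. minimal_dominating_set (VG \<times> VH) (direct_prod_edges EG EH) M \<Longrightarrow>
    dominating_set (VG \<times> VH) (direct_prod_edges EG EH) S \<Longrightarrow> card M \<le> card S"
    using assms(7) by (auto simp: well_dominated_def minimum_dominating_set_def direct_prod_vertices_def)
  have P1: "independent_set VG EG D" if D: "minimum_dominating_set VG EG D" for D
  proof (rule ccontr)
    assume ni: "\<not> independent_set VG EG D"
    have "D \<subseteq> VG" using D by (auto simp: minimum_dominating_set_def dominating_set_def)
    then obtain a b where "a \<in> D" "b \<in> D" "EG a b" using ni by (auto simp: independent_set_def)
    then obtain M S where "minimal_dominating_set (VG \<times> VH) (direct_prod_edges EG EH) M"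
      "dominating_set (VG \<times> VH) (direct_prod_edges EG EH) S" "card S < card M"
      using key[OF assms(1,4,5,6) D] by blast
    then show False using wd by fastforce
  qed
  have P2: "independent_set VH EH D" if D: "minimum_dominating_set VH EH D" for D
  proof (rule ccontr)
    assume ni: "\<not> independent_set VH EH D"
    have "D \<subseteq> VH" using D by (auto simp: minimum_dominating_set_def dominating_set_def)
    then obtain a b where "a \<in> D" "b \<in> D" "EH a b" using ni by (auto simp: independent_set_def)
    then obtain M S where M: "minimal_dominating_set (VH \<times> VG) (direct_prod_edges EH EG) M"
      and S: "dominating_set (VH \<times> VG) (direct_prod_edges EH EG) S" and c: "card S < card M"
      using key[OF assms(4,1,2,3) D] by blast
    have "card (prod.swap ` M) \<le> card (prod.swap ` S)"
      using wd[OF swap_min[OF M] swap_dom[OF S]] .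
    then have "card M \<le> card S" by (simp add: card_image)
    then show False using c by simp
  qed
  show ?thesis using P1 P2 by blast
qed

end
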